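(* Let $(\mathcal{N},\|\cdot\|)$ be a real normed space with Borel $\sigma$-algebra $\mathcal{B}$ such that the addition is measurable from $(\mathcal{N}^2,\mathcal{B}\otimes\mathcal{B})$ to $(\mathcal{N},\mathcal{B})$, and let $\kappa$ be the density of $\mathcal{N}$. Then there is no probability measure on $(\kappa,\mathfrak{P}(\kappa))$ such that every singleton has measure zero.
   Context: The density of $\mathcal{N}$ is the smallest cardinal $\kappa$ such that $\mathcal{N}$ has a dense subset of cardinality $\kappa$; $\kappa$ is regarded as a set (von Neumann cardinal), and $\mathfrak{P}(E)$ denotes the power set of $E$. *)

theory Defs
  imports "HOL-Probability.Probability"
begin

definition dense_set :: "'a::topological_space set \<Rightarrow> bool" where
  "dense_set D \<longleftrightarrow> closure D = UNIV"

definition density_witness :: "'a::topological_space set \<Rightarrow> bool" where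
  "density_witness D \<longleftrightarrow> dense_set D \<and>
     (\<forall>E::'a set. dense_set E \<longrightarrow> (card_of D, card_of E) \<in> ordLeq)"

end

theory Submission
  imports Defs "HOL-Algebra.Free_Abelian_Groups" "HOL-Library.Countable_Set_Type"
begin
lemma riesz_step:
  fixes S :: "'a::real_normed_vector set"
  assumes S: "subspace S" and nd: "closure S \<noteq> UNIV"
  shows "\<exists>v. norm v = 1 \<and> (\<forall>w\<in>S. norm (v - w) \<ge> 1/2)"
proof -
  obtain y where y: "y \<notin> closure S" using nd by auto
  have S0: "S \<noteq> {}" using S subspace_0 by auto
  define d where "d = infdist y S"
  have dpos: "d > 0" using y S0 in_closure_iff_infdist_zero[OF S0, of y] infdist_nonneg[of y S]
    unfolding d_def by linarith
  have "\<exists>s\<in>S. dist y s < 2*d"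
  proof (rule ccontr)
    assume "\<not> ?thesis"
    then have "\<forall>s\<in>S. 2*d \<le> dist y s" by auto
    then have "2*d \<le> infdist y S" unfolding infdist_def using S0
      by (auto intro!: cINF_greatest)
    then show False using dpos d_def by simp
  qed
  then obtain s where s: "s \<in> S" "dist y s < 2*d" by blast
  define u where "u = y - s"
  have "y \<noteq> s" using y s(1) closure_subset by blast
  then have nu: "norm u > 0" unfolding u_def by simp
  define v where "v = u /\<^sub>R norm u"
  have "norm v = 1" unfolding v_def using nu by simp
  moreover have "\<forall>w\<in>S. norm (v - w) \<ge> 1/2"
  proof
    fix w assume w: "w \<in> S"
    have "s + norm u *\<^sub>R w \<in> S" using S s(1) w by (simp add: subspace_add subspace_scale)
    then have "d \<le> dist y (s + norm u *\<^sub>R w)" unfolding d_def by (rule infdist_le)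
    also have "dist y (s + norm u *\<^sub>R w) = norm (u - norm u *\<^sub>R w)"
      unfolding u_def dist_norm by (simp add: algebra_simps)
    also have "u - norm u *\<^sub>R w = norm u *\<^sub>R (v - w)" unfolding v_def using nu
      by (simp add: algebra_simps)
    also have "norm (norm u *\<^sub>R (v - w)) = norm u * norm (v - w)" by simp
    finally have "d \<le> norm u * norm (v - w)" .
    moreover have "norm u < 2 * d" using s(2) unfolding u_def dist_norm .
    ultimately have "norm u < 2 * (norm u * norm (v - w))" by linarith
    then show "norm (v - w) \<ge> 1/2" using nu by (simp add: field_simps)
  qed
  ultimately show ?thesis by blast
qed

lemma scaled_sep:
  fixes v :: "'a::real_normed_vector"
  assumes S: "subspace S" and v: "\<forall>w\<in>S. norm (v - w) \<ge> 1/2"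
    and k: "\<bar>k\<bar> \<ge> 1" and w: "w \<in> S"
  shows "norm (k *\<^sub>R v - w) \<ge> 1/2"
proof -
  have k0: "k \<noteq> 0" using k by auto
  have "(1/k) *\<^sub>R w \<in> S" using S w by (simp add: subspace_scale)
  then have h: "norm (v - (1/k) *\<^sub>R w) \<ge> 1/2" using v by blast
  have "k *\<^sub>R v - w = k *\<^sub>R (v - (1/k) *\<^sub>R w)" using k0 by (simp add: algebra_simps)
  then have "norm (k *\<^sub>R v - w) = \<bar>k\<bar> * norm (v - (1/k) *\<^sub>R w)" by simp
  also have "\<dots> \<ge> 1 * (1/2)" using k h by (intro mult_mono) auto
  finally show ?thesis by simp
qed

definition ratcomb :: "(rat \<times> 'a::real_vector) list \<Rightarrow> 'a" where
  "ratcomb xs = sum_list (map (\<lambda>(q,v). real_of_rat q *\<^sub>R v) xs)"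

lemma closure_add_closed:
  fixes Q :: "'a::real_normed_vector set"
  assumes add: "\<forall>a\<in>Q. \<forall>b\<in>Q. a + b \<in> Q"
    and a: "a \<in> closure Q" and b: "b \<in> closure Q"
  shows "a + b \<in> closure Q"
proof -
  obtain f where f: "\<forall>n. f n \<in> Q" "f \<longlonglongrightarrow> a" using a closure_sequential by blast
  obtain g where g: "\<forall>n. g n \<in> Q" "g \<longlonglongrightarrow> b" using b closure_sequential by blast
  have "\<forall>n. f n + g n \<in> Q" using f g add by blast
  moreover have "(\<lambda>n. f n + g n) \<longlonglongrightarrow> a + b" using f g by (intro tendsto_add)
  ultimately have "(\<forall>n. (\<lambda>n. f n + g n) n \<in> Q) \<and> (\<lambda>n. f n + g n) \<longlonglongrightarrow> a + b"
    by (intro conjI)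
  then show ?thesis unfolding closure_sequential[of "a + b"] by (rule exI[of _ "\<lambda>n. f n + g n"])
qed

lemma span_in_closure_gen:
  fixes A :: "'a::real_normed_vector set" and Q :: "'a set"
  assumes sc: "\<And>c v. v \<in> A \<Longrightarrow> c *\<^sub>R v \<in> closure Q"
  and z: "0 \<in> closure Q"
  and addc: "\<And>a b. a \<in> closure Q \<Longrightarrow> b \<in> closure Q \<Longrightarrow> a + b \<in> closure Q"
  shows "span A \<subseteq> closure Q"
proof -
  have main: "finite t \<Longrightarrow> t \<subseteq> A \<Longrightarrow> (\<Sum>a\<in>t. r a *\<^sub>R a) \<in> closure Q" for t r
  proof (induction t rule: finite_induct)
    case empty
    then show ?case using z by simp
  next
    case (insert x F)
    have "r x *\<^sub>R x \<in> closure Q" using insert(4) by (intro sc) simp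
    moreover have "(\<Sum>a\<in>F. r a *\<^sub>R a) \<in> closure Q"
      by (rule insert.IH) (use insert.prems in simp)
    ultimately have "r x *\<^sub>R x + (\<Sum>a\<in>F. r a *\<^sub>R a) \<in> closure Q"
      by (rule addc)
    then show ?case using insert(1,2) by simp
  qed
  show ?thesis
  proof
    fix y assume "y \<in> span A"
    then obtain t r where "finite t" "t \<subseteq> A" "y = (\<Sum>a\<in>t. r a *\<^sub>R a)"
      unfolding span_explicit by auto
    then show "y \<in> closure Q" using main[of t r] by simp
  qed
qed

lemma span_in_closure_ratcomb:
  fixes A :: "'a::real_normed_vector set"
  shows "span A \<subseteq> closure (ratcomb ` lists (UNIV \<times> A))"
proof -
  let ?Q = "ratcomb ` lists (UNIV \<times> A)"
  have add: "a + b \<in> ?Q" if ha: "a \<in> ?Q" and hb: "b \<in> ?Q" for a b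
  proof -
    obtain xs ys where "xs \<in> lists (UNIV \<times> A)" "ys \<in> lists (UNIV \<times> A)" "a = ratcomb xs" "b = ratcomb ys"
      using ha hb by (auto simp: image_iff)
    then show ?thesis by (intro image_eqI[of _ _ "xs @ ys"]) (auto simp: ratcomb_def)
  qed
  have sc: "c *\<^sub>R v \<in> closure ?Q" if v: "v \<in> A" for c v
  proof -
    have "c \<in> closure \<rat>" using Rats_closure_real by simp
    then obtain f where f: "\<forall>n. f n \<in> \<rat>" "f \<longlonglongrightarrow> c" using closure_sequential by blast
    have "\<forall>n. f n *\<^sub>R v \<in> ?Q"
    proof
      fix n
      have "f n \<in> \<rat>" using f(1) by blast
      then obtain q where q: "f n = of_rat q" by (rule Rats_cases)
      show "f n *\<^sub>R v \<in> ?Q" using v by (intro image_eqI[of _ _ "[(q,v)]"]) (auto simp: ratcomb_def q)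
    qed
    moreover have "(\<lambda>n. f n *\<^sub>R v) \<longlonglongrightarrow> c *\<^sub>R v" using f(2) by (intro tendsto_scaleR) auto
    ultimately have "(\<forall>n. (\<lambda>n. f n *\<^sub>R v) n \<in> ?Q) \<and> (\<lambda>n. f n *\<^sub>R v) \<longlonglongrightarrow> c *\<^sub>R v"
      by (intro conjI)
    then show ?thesis unfolding closure_sequential[of "c *\<^sub>R v"] by (rule exI[of _ "\<lambda>n. f n *\<^sub>R v"])
  qed
  have addall: "\<forall>a\<in>?Q. \<forall>b\<in>?Q. a + b \<in> ?Q" using add by (intro ballI)
  have z: "0 \<in> ?Q" by (intro image_eqI[of _ _ "[]"]) (auto simp: ratcomb_def)
  have z': "0 \<in> closure ?Q" using z closure_subset[of ?Q] by (rule subsetD[rotated])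
  show ?thesis
    by (rule span_in_closure_gen[OF sc z' closure_add_closed[OF addall]])
qed


lemma small_not_dense:
  fixes D :: "'a::real_normed_vector set" and A :: "'a set"
  assumes dens: "density_witness D" and unc: "\<not> countable D" and small: "|A| <o |D|"
  shows "closure (span A) \<noteq> UNIV"
proof
  assume h: "closure (span A) = UNIV"
  define L where "L = (lists (UNIV \<times> A) :: (rat \<times> 'a) list set)"
  define Q where "Q = ratcomb ` L"
  have "closure (span A) \<subseteq> closure Q"
    using closure_mono[OF span_in_closure_ratcomb[of A]] unfolding Q_def L_def by simp
  then have "closure Q = UNIV" using h by auto
  then have "dense_set Q" by (simp add: dense_set_def)
  then have le: "|D| \<le>o |Q|" using dens unfolding density_witness_def by blast
  have q: "|Q| \<le>o |L|" unfolding Q_def by (rule card_of_image)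
  show False
  proof (cases "countable A")
    case True
    then have "countable L" unfolding L_def by simp
    then have "countable Q" unfolding Q_def by simp
    then have "|Q| \<le>o |UNIV::nat set|" using countable_card_of_nat by blast
    then have "|D| \<le>o |UNIV::nat set|" using le ordLeq_transitive by blast
    then have "countable D" using countable_card_of_nat by blast
    then show False using unc by simp
  next
    case False
    then have inf: "infinite A" using countable_finite by blast
    have "|UNIV::rat set| \<le>o |UNIV::nat set|" using countable_card_of_nat[of "UNIV::rat set"] by simp
    moreover have "|UNIV::nat set| \<le>o |A|" using inf infinite_iff_card_of_nat by blast
    ultimately have "|UNIV::rat set| \<le>o |A|" using ordLeq_transitive by blast
    then have pA: "|UNIV \<times> A :: (rat \<times> 'a) set| =o |A|" using card_of_Times_infinite[OF inf, of "UNIV::rat set"] by auto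
    have "infinite (UNIV \<times> A :: (rat \<times> 'a) set)"
      using inf finite_cartesian_productD2[of "UNIV::rat set" A] by auto
    then have "|L| =o |UNIV \<times> A :: (rat \<times> 'a) set|" unfolding L_def by (rule card_of_lists_infinite)
    then have "|L| =o |A|" using pA ordIso_transitive by blast
    then have "|D| \<le>o |A|" using le q ordLeq_transitive ordLeq_ordIso_trans ordIso_iff_ordLeq by blast
    then have "|D| <o |D|" using small ordLeq_ordLess_trans by blast
    then show False using ordLess_irreflexive by blast
  qed
qed
lemma finite_max_rel:
  assumes tot: "\<forall>a\<in>K. \<forall>b\<in>K. (a,b) \<in> r \<or> (b,a) \<in> r" and tr: "trans r"
    and fin: "finite S" and ne: "S \<noteq> {}" and SK: "S \<subseteq> K"
  shows "\<exists>m\<in>S. \<forall>z\<in>S. (z,m) \<in> r"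
  using fin ne SK
proof (induction S rule: finite_ne_induct)
  case (singleton x)
  then show ?case using tot by auto
next
  case (insert y F)
  then obtain m where m: "m \<in> F" "\<forall>z\<in>F. (z,m) \<in> r" by auto
  have yK: "y \<in> K" and mK: "m \<in> K" using insert.prems m(1) by auto
  show ?case
  proof (cases "(m,y) \<in> r")
    case True
    have "\<forall>z\<in>insert y F. (z,y) \<in> r"
      using True m(2) tr tot yK by (auto dest: transD)
    then show ?thesis by blast
  next
    case False
    then have "(y,m) \<in> r" using tot yK mK by blast
    then show ?thesis using m by blast
  qed
qed

theorem lemma4p10:
  fixes D :: "'a::real_normed_vector set" and K :: "'b set"
  assumes add_meas: "(\<lambda>(x, y). x + y) \<in> measurable (borel \<Otimes>\<^sub>M borel) (borel :: 'a measure)"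
    and dens: "density_witness D"
    and kappa: "(card_of K, card_of D) \<in> ordIso"
  shows "\<not> (\<exists>M. prob_space M \<and> space M = K \<and> sets M = Pow K \<and>
                (\<forall>x\<in>K. emeasure M {x} = 0))"
proof
  assume "\<exists>M. prob_space M \<and> space M = K \<and> sets M = Pow K \<and> (\<forall>x\<in>K. emeasure M {x} = 0)"
  then obtain M where Mp: "prob_space M" and sp: "space M = K" and st: "sets M = Pow K"
    and sing: "\<forall>x\<in>K. emeasure M {x} = 0" by blast
  interpret P: prob_space M by (rule Mp)
  have allsets: "S \<in> sets M" if "S \<subseteq> K" for S using st that by auto
  have uncK: "\<not> countable K"
  proof
    assume cK: "countable K"
    have "emeasure M K = (\<integral>\<^sup>+x. emeasure M {x} \<partial>count_space K)"
      by (rule emeasure_countable_singleton) (use allsets cK in auto)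
    also have "\<dots> = (\<integral>\<^sup>+x. 0 \<partial>count_space K)" by (rule nn_integral_cong) (simp add: sing)
    finally have "emeasure M K = 0" by simp
    moreover have "emeasure M K = 1" using P.emeasure_space_1 sp by simp
    ultimately show False by simp
  qed
  have uncD: "\<not> countable D"
  proof
    assume "countable D"
    then have "|D| \<le>o |UNIV::nat set|" using countable_card_of_nat by blast
    then have "|K| \<le>o |UNIV::nat set|" using kappa ordIso_ordLeq_trans by blast
    then show False using uncK countable_card_of_nat by blast
  qed
  define r where "r = |K|"
  have Fr: "Field r = K" unfolding r_def by (rule Field_card_of)
  have Cr: "Card_order r" unfolding r_def by (rule card_of_Card_order)
  have wo: "wo_rel r" unfolding r_def wo_rel_def by (rule card_of_Well_order)
  have wf: "wf (r - Id)" using wo by (rule wo_rel.WF)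
  have tot: "\<forall>a\<in>K. \<forall>b\<in>K. (a,b) \<in> r \<or> (b,a) \<in> r" using wo_rel.TOTALS[OF wo] Fr by simp
  have tr: "trans r" using wo by (rule wo_rel.TRANS)
  have uK: "underS r a \<subseteq> K" for a using Order_Relation.underS_Field[of r a] Fr by simp
  have smallU: "|underS r a| <o |D|" if "a \<in> K" for a
  proof -
    have "a \<in> Field r" using that Fr by simp
    from card_of_underS[OF Cr this] have "|underS r a| <o |K|" unfolding r_def .
    then show ?thesis using kappa ordLess_ordIso_trans by blast
  qed
  define F where "F = (\<lambda>g a. SOME v::'a. norm v = 1 \<and> (\<forall>w\<in>span (g ` underS r a). norm (v - w) \<ge> 1/2))"
  define x where "x = wfrec (r - Id) F"
  have xP: "norm (x a) = 1 \<and> (\<forall>w\<in>span (x ` underS r a). norm (x a - w) \<ge> 1/2)" if a: "a \<in> K" for a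
  proof -
    have "x a = F (cut x (r - Id) a) a" unfolding x_def by (rule wfrec[OF wf])
    moreover have "cut x (r - Id) a ` underS r a = x ` underS r a"
      by (auto simp: cut_apply underS_def)
    ultimately have xa: "x a = (SOME v. norm v = 1 \<and> (\<forall>w\<in>span (x ` underS r a). norm (v - w) \<ge> 1/2))"
      unfolding F_def by simp
    have "|x ` underS r a| <o |D|" using card_of_image smallU[OF a] ordLeq_ordLess_trans by blast
    then have "closure (span (x ` underS r a)) \<noteq> UNIV" by (rule small_not_dense[OF dens uncD])
    then have "\<exists>v. norm v = 1 \<and> (\<forall>w\<in>span (x ` underS r a). norm (v - w) \<ge> 1/2)"
      by (rule riesz_step[OF subspace_span])
    then show ?thesis unfolding xa by (rule someI_ex)
  qed
  have lt_span: "x b \<in> span (x ` underS r a)" if "b \<in> underS r a" for a b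
    using that by (intro span_base imageI)
  have sep2: "norm (x b - x c) \<ge> 1/2" if bc: "b\<in>K" "c\<in>K" "b\<noteq>c" for b c
  proof (cases "(c,b) \<in> r")
    case True
    then have "c \<in> underS r b" using bc by (simp add: underS_def)
    then show ?thesis using xP[OF bc(1)] lt_span by blast
  next
    case False
    then have "(b,c) \<in> r" using tot bc by blast
    then have "b \<in> underS r c" using bc by (simp add: underS_def)
    then have "norm (x c - x b) \<ge> 1/2" using xP[OF bc(2)] lt_span by blast
    then show ?thesis by (simp add: norm_minus_commute)
  qed
  have core: "norm ((x a - x b) - (x c - x d)) \<ge> 1/2"
    if K4: "a\<in>K" "b\<in>K" "c\<in>K" "d\<in>K" and ne: "a\<noteq>b" "c\<noteq>d" "(a,b) \<noteq> (c,d)"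
      and mx: "(b,a)\<in>r" "(c,a)\<in>r" "(d,a)\<in>r" for a b c d
  proof -
    let ?S = "span (x ` underS r a)"
    have sub: "subspace ?S" by (rule subspace_span)
    have Pa: "\<forall>w\<in>?S. norm (x a - w) \<ge> 1/2" using xP[OF K4(1)] by blast
    have inS: "x z \<in> ?S" if "(z,a) \<in> r" "z \<noteq> a" for z using that by (intro lt_span) (simp add: underS_def)
    show ?thesis
    proof (cases "d = a")
      case True
      have "c \<noteq> a" using ne True by auto
      have w: "x b + x c \<in> ?S" using inS[OF mx(1)] inS[OF mx(2)] ne(1) \<open>c\<noteq>a\<close> by (intro span_add) auto
      have eq: "(x a - x b) - (x c - x d) = 2 *\<^sub>R x a - (x b + x c)" using True by (simp add: algebra_simps scaleR_2)
      have h: "1/2 \<le> norm (2 *\<^sub>R x a - (x b + x c))" by (rule scaled_sep[OF sub Pa _ w]) simp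
      show ?thesis unfolding eq by (rule h)
    next
      case False
      show ?thesis
      proof (cases "c = a")
        case True
        have "b \<noteq> d" using ne True by auto
        have "(x a - x b) - (x c - x d) = x d - x b" using True by simp
        then show ?thesis using sep2[OF K4(4) K4(2)] \<open>b\<noteq>d\<close> by auto
      next
        case False2: False
        have w: "x b + x c - x d \<in> ?S" using inS[OF mx(1)] inS[OF mx(2)] inS[OF mx(3)] ne(1) False False2
          by (intro span_add span_diff) auto
        have eq: "(x a - x b) - (x c - x d) = 1 *\<^sub>R x a - (x b + x c - x d)" by (simp add: algebra_simps)
        have h: "1/2 \<le> norm (1 *\<^sub>R x a - (x b + x c - x d))" by (rule scaled_sep[OF sub Pa _ w]) simp
        show ?thesis unfolding eq by (rule h)
      qed
    qed
  qed
  have sep4: "norm ((x a - x b) - (x c - x d)) \<ge> 1/2"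
    if K4: "a\<in>K" "b\<in>K" "c\<in>K" "d\<in>K" and ne: "a\<noteq>b" "c\<noteq>d" "(a,b) \<noteq> (c,d)" for a b c d
  proof -
    obtain m where m: "m \<in> {a,b,c,d}" "\<forall>z\<in>{a,b,c,d}. (z,m) \<in> r"
      using finite_max_rel[OF tot tr, of "{a,b,c,d}"] K4 by auto
    have n1: "norm ((x b - x a) - (x d - x c)) = norm ((x a - x b) - (x c - x d))"
    proof -
      have "(x b - x a) - (x d - x c) = - ((x a - x b) - (x c - x d))" by (simp add: algebra_simps)
      then show ?thesis by (simp only: norm_minus_cancel)
    qed
    have n2: "norm ((x c - x d) - (x a - x b)) = norm ((x a - x b) - (x c - x d))"
      by (rule norm_minus_commute)
    have n3: "(x d - x c) - (x b - x a) = (x a - x b) - (x c - x d)" by (simp add: algebra_simps)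
    from m(1) show ?thesis
    proof (elim insertE)
      assume "m = a" then show ?thesis using core[OF K4 ne] m(2) by auto
    next
      assume "m = b" then show ?thesis using core[OF K4(2,1,4,3)] ne m(2) n1 by auto
    next
      assume "m = c" then show ?thesis using core[OF K4(3,4,1,2)] ne m(2) n2 by auto
    next
      assume "m \<in> {}" then show ?thesis by simp
    next
      assume "m = d" then show ?thesis using core[OF K4(4,3,2,1)] ne m(2) n3 by auto
    qed
  qed
  obtain I where I: "I \<subseteq> K" "emeasure M I > 0" "\<forall>b\<in>I. emeasure M (underS r b) = 0"
  proof (cases "\<exists>a\<in>K. emeasure M (underS r a) > 0")
    case False
    have "emeasure M K > 0" using P.emeasure_space_1 sp by simp
    then show ?thesis using False that[of K] by (auto simp: not_gr_zero)
  next
    case True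
    then obtain a0 where a0: "a0 \<in> {a\<in>K. emeasure M (underS r a) > 0}" by blast
    obtain a where a: "a \<in> {a\<in>K. emeasure M (underS r a) > 0}"
      and amin: "\<And>y. (y,a) \<in> r - Id \<Longrightarrow> y \<notin> {a\<in>K. emeasure M (underS r a) > 0}"
      using wfE_min[OF wf a0] by blast
    have "\<forall>b\<in>underS r a. emeasure M (underS r b) = 0"
    proof
      fix b assume b: "b \<in> underS r a"
      then have "(b,a) \<in> r - Id" by (auto simp: underS_def)
      then have "b \<notin> {a\<in>K. emeasure M (underS r a) > 0}" by (rule amin)
      moreover have "b \<in> K" using b uK by blast
      ultimately show "emeasure M (underS r b) = 0" by (auto simp: not_gr_zero)
    qed
    then show ?thesis using that[of "underS r a"] uK a by blast
  qed
  define R2 where "R2 = {(b,c). b \<in> I \<and> c \<in> I \<and> b \<in> underS r c}"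
  define f where "f = (\<lambda>p. x (fst p) - x (snd p))"
  have xm: "x \<in> borel_measurable M" by (auto simp: measurable_def st sp)
  have nxm: "(\<lambda>a. - x a) \<in> borel_measurable M" by (auto simp: measurable_def st sp)
  have fm: "f \<in> borel_measurable (M \<Otimes>\<^sub>M M)"
  proof -
    have "(\<lambda>p. (x (fst p), - x (snd p))) \<in> measurable (M \<Otimes>\<^sub>M M) (borel \<Otimes>\<^sub>M borel)"
      by (intro measurable_Pair measurable_compose[OF measurable_fst xm] measurable_compose[OF measurable_snd nxm])
    from measurable_comp[OF this add_meas] show ?thesis unfolding f_def comp_def by simp
  qed
  have R2K: "p \<in> R2 \<Longrightarrow> fst p \<in> K \<and> snd p \<in> K \<and> fst p \<noteq> snd p" for p
    using I(1) by (auto simp: R2_def underS_def)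
  have offsep: "norm (f p - f q) \<ge> 1/2"
    if "fst p \<in> K" "snd p \<in> K" "fst p \<noteq> snd p" "fst q \<in> K" "snd q \<in> K" "fst q \<noteq> snd q" "p \<noteq> q" for p q
    using sep4[of "fst p" "snd p" "fst q" "snd q"] that unfolding f_def by (auto simp: prod_eq_iff)
  define B where "B = f ` R2"
  have closedB: "closed B" unfolding B_def
  proof (rule discrete_imp_closed[of "1/2"])
    show "\<forall>u\<in>f ` R2. \<forall>v\<in>f ` R2. dist v u < 1/2 \<longrightarrow> v = u"
    proof (intro ballI impI)
      fix u v assume u: "u \<in> f ` R2" and v: "v \<in> f ` R2" and d: "dist v u < 1/2"
      obtain p where p: "p \<in> R2" "u = f p" using u by blast
      obtain q where q: "q \<in> R2" "v = f q" using v by blast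
      show "v = u"
      proof (cases "p = q")
        case True then show ?thesis using p q by simp
      next
        case False
        then have "norm (f q - f p) \<ge> 1/2" using offsep[of q p] R2K[OF p(1)] R2K[OF q(1)] by auto
        then show ?thesis using d p q by (simp add: dist_norm)
      qed
    qed
  qed simp
  have spP: "space (M \<Otimes>\<^sub>M M) = K \<times> K" by (simp add: space_pair_measure sp)
  have R2eq: "R2 = (f -` B \<inter> space (M \<Otimes>\<^sub>M M)) \<inter> (I \<times> I)"
  proof
    show "R2 \<subseteq> (f -` B \<inter> space (M \<Otimes>\<^sub>M M)) \<inter> (I \<times> I)"
      using I(1) unfolding B_def spP by (auto simp: R2_def)
  next
    show "(f -` B \<inter> space (M \<Otimes>\<^sub>M M)) \<inter> (I \<times> I) \<subseteq> R2"
    proof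
      fix p assume p: "p \<in> (f -` B \<inter> space (M \<Otimes>\<^sub>M M)) \<inter> (I \<times> I)"
      then obtain q where q: "q \<in> R2" "f p = f q" unfolding B_def by auto
      have pK: "fst p \<in> K" "snd p \<in> K" using p I(1) by auto
      show "p \<in> R2"
      proof (rule ccontr)
        assume np: "p \<notin> R2"
        then have "p \<noteq> q" using q by auto
        show False
        proof (cases "fst p = snd p")
          case True
          then have "f p = 0" unfolding f_def by simp
          moreover have "norm (f q) \<ge> 1/2" using sep2[of "fst q" "snd q"] R2K[OF q(1)] unfolding f_def by auto
          ultimately show False using q by simp
        next
          case False
          then have "norm (f p - f q) \<ge> 1/2" using offsep[of p q] pK R2K[OF q(1)] \<open>p \<noteq> q\<close> by auto
          then show False using q by simp
        qed
      qed
    qed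
  qed
  have R2s: "R2 \<in> sets (M \<Otimes>\<^sub>M M)"
  proof -
    have "f -` B \<inter> space (M \<Otimes>\<^sub>M M) \<in> sets (M \<Otimes>\<^sub>M M)"
      using measurable_sets[OF fm] closedB by (simp add: borel_closed)
    moreover have "I \<times> I \<in> sets (M \<Otimes>\<^sub>M M)" using allsets I(1) by (intro pair_measureI) auto
    ultimately show ?thesis unfolding R2eq by (rule sets.Int)
  qed
  interpret PS: pair_sigma_finite M M
    by (simp add: pair_sigma_finite_def P.sigma_finite_measure_axioms)
  have e1: "emeasure (M \<Otimes>\<^sub>M M) R2 = (\<integral>\<^sup>+b. emeasure M (Pair b -` R2) \<partial>M)"
    by (rule P.emeasure_pair_measure_alt[OF R2s])
  have e2: "emeasure (M \<Otimes>\<^sub>M M) R2 = (\<integral>\<^sup>+c. emeasure M ((\<lambda>b. (b,c)) -` R2) \<partial>M)"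
    by (rule PS.emeasure_pair_measure_alt2[OF R2s])
  have "(\<integral>\<^sup>+c. emeasure M ((\<lambda>b. (b,c)) -` R2) \<partial>M) = (\<integral>\<^sup>+c. 0 \<partial>M)"
  proof (rule nn_integral_cong)
    fix c assume "c \<in> space M"
    show "emeasure M ((\<lambda>b. (b, c)) -` R2) = 0"
    proof (cases "c \<in> I")
      case True
      have "(\<lambda>b. (b,c)) -` R2 \<subseteq> underS r c" by (auto simp: R2_def)
      then have "emeasure M ((\<lambda>b. (b,c)) -` R2) \<le> emeasure M (underS r c)"
        by (rule emeasure_mono) (rule allsets[OF uK])
      then show ?thesis using I(3) True by simp
    next
      case False
      then have "(\<lambda>b. (b,c)) -` R2 = {}" by (auto simp: R2_def)
      then show ?thesis by simp
    qed
  qed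
  then have zero: "emeasure (M \<Otimes>\<^sub>M M) R2 = 0" using e2 by simp
  have "(\<integral>\<^sup>+b. emeasure M I * indicator I b \<partial>M) \<le> (\<integral>\<^sup>+b. emeasure M (Pair b -` R2) \<partial>M)"
  proof (rule nn_integral_mono)
    fix b assume "b \<in> space M"
    show "emeasure M I * indicator I b \<le> emeasure M (Pair b -` R2)"
    proof (cases "b \<in> I")
      case False then show ?thesis by simp
    next
      case True
      have bK: "b \<in> K" using True I(1) by auto
      have sub: "I \<subseteq> (Pair b -` R2) \<union> (underS r b \<union> {b})"
      proof
        fix c assume c: "c \<in> I"
        have cK: "c \<in> K" using c I(1) by auto
        show "c \<in> (Pair b -` R2) \<union> (underS r b \<union> {b})"
        proof (cases "c = b")
          case True then show ?thesis by simp
        next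
          case False
          from tot bK cK have "(b,c) \<in> r \<or> (c,b) \<in> r" by blast
          then show ?thesis using False c True by (auto simp: R2_def underS_def)
        qed
      qed
      have s1: "Pair b -` R2 \<in> sets M" using I(1) by (intro allsets) (auto simp: R2_def)
      have s2: "underS r b \<in> sets M" by (rule allsets[OF uK])
      have s3: "{b} \<in> sets M" using bK by (intro allsets) auto
      have z2: "emeasure M (underS r b \<union> {b}) = 0"
      proof -
        have "emeasure M (underS r b \<union> {b}) \<le> emeasure M (underS r b) + emeasure M {b}"
          by (rule emeasure_subadditive[OF s2 s3])
        also have "\<dots> = 0" using I(3) True sing bK by simp
        finally show ?thesis by simp
      qed
      have "emeasure M I \<le> emeasure M ((Pair b -` R2) \<union> (underS r b \<union> {b}))"
        by (rule emeasure_mono[OF sub]) (intro sets.Un s1 s2 s3)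
      also have "\<dots> \<le> emeasure M (Pair b -` R2) + emeasure M (underS r b \<union> {b})"
        by (rule emeasure_subadditive) (intro sets.Un s1 s2 s3)+
      also have "\<dots> = emeasure M (Pair b -` R2)" using z2 by simp
      finally show ?thesis using True by simp
    qed
  qed
  also have "\<dots> = 0" using e1 zero by simp
  finally have "emeasure M I * emeasure M I \<le> 0"
    using nn_integral_cmult_indicator[OF allsets[OF I(1)], of "emeasure M I"] by simp
  moreover have "emeasure M I * emeasure M I > 0" using I(2) by (simp add: ennreal_zero_less_mult_iff)
  ultimately show False by simp
qed
end
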